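(* There exist $u_0\in\exp L^2(\mathbb{R}^N)$ and a constant $C>0$ such that $$\|e^{-t\Delta^2}u_0-u_0\|_{\exp L^2}\geq C\quad\text{for all }t>0.$$
   Context: $e^{-t\Delta^2}$ denotes the biharmonic heat semigroup on $\mathbb{R}^N$: $e^{-t\Delta^2}\varphi=E_t\star\varphi$ with $E_t(x)=(2\pi)^{-N}\int_{\mathbb{R}^N}e^{-t|\xi|^4}e^{ix\cdot\xi}\,d\xi$. The Orlicz space $\exp L^2(\mathbb{R}^N)$ is the set of $u\in L^1_{loc}(\mathbb{R}^N)$ such that $\int_{\mathbb{R}^N}(e^{|u(x)|^2/\alpha^2}-1)\,dx<\infty$ for some $\alpha>0$, with the Luxemburg norm $\|u\|_{\exp L^2}=\inf\{\alpha>0:\int_{\mathbb{R}^N}(e^{|u(x)|^2/\alpha^2}-1)\,dx\leq 1\}$. *)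

theory Defs
  imports "HOL-Analysis.Analysis"
begin

definition biharm_kernel :: "real \<Rightarrow> 'a::euclidean_space \<Rightarrow> complex" where
  "biharm_kernel t x =
     complex_of_real ((2 * pi) powr (- real DIM('a))) *
     (LINT xi|lebesgue. complex_of_real (exp (- t * norm xi ^ 4)) * exp (\<i> * complex_of_real (x \<bullet> xi)))"

definition biharm_semigroup :: "real \<Rightarrow> ('a::euclidean_space \<Rightarrow> complex) \<Rightarrow> 'a \<Rightarrow> complex" where
  "biharm_semigroup t \<phi> x = (LINT y|lebesgue. biharm_kernel t (x - y) * \<phi> y)"

definition L1_loc :: "('a::euclidean_space \<Rightarrow> complex) set" where
  "L1_loc = {u. u \<in> borel_measurable lebesgue \<and>
                (\<forall>K. compact K \<longrightarrow> set_integrable lebesgue K u)}"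

definition orlicz_exp2_modular :: "('a::euclidean_space \<Rightarrow> complex) \<Rightarrow> real \<Rightarrow> ennreal" where
  "orlicz_exp2_modular u \<alpha> =
     (\<integral>\<^sup>+ x. ennreal (exp ((cmod (u x))\<^sup>2 / \<alpha>\<^sup>2) - 1) \<partial>lebesgue)"

definition expL2 :: "('a::euclidean_space \<Rightarrow> complex) set" where
  "expL2 = {u. u \<in> L1_loc \<and> (\<exists>\<alpha>>0. orlicz_exp2_modular u \<alpha> < \<infinity>)}"

text \<open>Luxemburg norm, valued in [0, infinity] (infinity when no admissible alpha exists).\<close>
definition expL2_norm :: "('a::euclidean_space \<Rightarrow> complex) \<Rightarrow> ennreal" where
  "expL2_norm u = Inf (ennreal ` {\<alpha>. \<alpha> > 0 \<and> orlicz_exp2_modular u \<alpha> \<le> 1})"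

end

theory Submission
  imports Defs
begin


definition rho :: "'a::euclidean_space itself \<Rightarrow> nat \<Rightarrow> real" where
  "rho T k = exp (- real k / real DIM('a))"
definition SS :: "nat \<Rightarrow> 'a::euclidean_space set" where
  "SS k = cbox 0 (rho TYPE('a) k *\<^sub>R One)"
definition AA :: "nat \<Rightarrow> 'a::euclidean_space set" where
  "AA k = SS k - SS (Suc k)"
definition mm :: "nat \<Rightarrow> real" where "mm k = exp (- real k) - exp (- real (Suc k))"

lemma emeasure_SS: "emeasure lebesgue (SS k :: 'a::euclidean_space set) = ennreal (exp (- real k))"
proof -
  have r: "rho TYPE('a) k ^ DIM('a) = exp (- real k)"
    unfolding rho_def by (simp add: exp_of_nat_mult[symmetric])
  have "emeasure lebesgue (SS k :: 'a set) = emeasure lborel (SS k :: 'a set)"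
    unfolding SS_def by simp
  also have "\<dots> = ennreal (rho TYPE('a) k ^ DIM('a))"
    unfolding SS_def by (subst emeasure_lborel_cbox) (auto simp: rho_def prod_constant)
  finally show ?thesis using r by simp
qed

lemma SS_mono: "SS (Suc k) \<subseteq> (SS k :: 'a::euclidean_space set)"
proof -
  have "rho TYPE('a) (Suc k) \<le> rho TYPE('a) k"
    unfolding rho_def by (auto simp: divide_simps)
  then show ?thesis unfolding SS_def by (force simp: mem_box)
qed

lemma emeasure_AA: "emeasure lebesgue (AA k :: 'a::euclidean_space set) = ennreal (mm k)"
proof -
  have [measurable]: "SS j \<in> sets lebesgue" for j :: nat
    unfolding SS_def by auto
  show ?thesis unfolding AA_def mm_def
    by (subst emeasure_Diff) (auto simp: emeasure_SS SS_mono ennreal_minus simp del: exp_minus)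
qed

lemma AA_sets[measurable]: "AA k \<in> sets lebesgue"
  unfolding AA_def SS_def by auto

lemma AA_disj: "x \<in> AA k \<Longrightarrow> x \<in> AA j \<Longrightarrow> j = k"
proof -
  have mono: "i \<le> j \<Longrightarrow> SS j \<subseteq> (SS i :: 'a set)" for i j
    by (induction j rule: dec_induct) (use SS_mono in auto)
  show "x \<in> AA k \<Longrightarrow> x \<in> AA j \<Longrightarrow> j = k" unfolding AA_def
    by (metis DiffE Suc_leI linorder_neqE_nat mono subsetD)
qed

lemma sum_AA_in:
  fixes c :: "nat \<Rightarrow> 'b::{t2_space,topological_comm_monoid_add,mult_zero,monoid_mult,zero_neq_one}"
  assumes "x \<in> AA k"
  shows "(\<Sum>j. c j * indicator (AA j) x) = c k"
proof -
  have "(\<lambda>j. c j * indicator (AA j) x) = (\<lambda>j. if j = k then c k else 0)"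
  proof
    fix j show "c j * indicator (AA j) x = (if j = k then c k else 0)"
    proof (cases "j = k")
      case True then show ?thesis using assms by simp
    next
      case False then have "x \<notin> AA j" using AA_disj[OF assms] by blast
      then show ?thesis using False by simp
    qed
  qed
  then show ?thesis using sums_single[of k "\<lambda>_. c k"] by (simp add: sums_iff)
qed

lemma sum_AA_out:
  fixes c :: "nat \<Rightarrow> 'b::{t2_space,topological_comm_monoid_add,mult_zero,monoid_mult,zero_neq_one}"
  assumes "\<forall>k. x \<notin> AA k"
  shows "(\<Sum>j. c j * indicator (AA j) x) = 0"
proof -
  have "(\<lambda>j. c j * indicator (AA j) x) = (\<lambda>j. 0)" using assms by simp
  then show ?thesis by simp
qed

definition u0 :: "'a::euclidean_space \<Rightarrow> real" where
  "u0 x = (\<Sum>k. sqrt (real k) * indicator (AA k) x)"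

lemma u0_in: "x \<in> AA k \<Longrightarrow> u0 x = sqrt (real k)"
  unfolding u0_def by (rule sum_AA_in)

lemma u0_out: "\<forall>k. x \<notin> AA k \<Longrightarrow> u0 x = 0"
  unfolding u0_def by (rule sum_AA_out)

lemma u0_meas[measurable]: "u0 \<in> borel_measurable lebesgue"
  unfolding u0_def by measurable

lemma u0_nonneg: "u0 x \<ge> 0"
  by (cases "\<exists>k. x \<in> AA k") (auto simp: u0_in u0_out)

lemma nn_int_AA:
  fixes f :: "'a::euclidean_space \<Rightarrow> ennreal"
  assumes "\<And>k x. x \<in> AA k \<Longrightarrow> f x = c k" "\<And>x. \<forall>k. x \<notin> AA k \<Longrightarrow> f x = 0"
  shows "(\<integral>\<^sup>+x. f x \<partial>lebesgue) = (\<Sum>k. c k * ennreal (mm k))"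
proof -
  have "f x = (\<Sum>k. c k * indicator (AA k) x)" for x
    by (cases "\<exists>k. x \<in> AA k") (auto simp: assms sum_AA_in sum_AA_out)
  then have "(\<integral>\<^sup>+x. f x \<partial>lebesgue) = (\<integral>\<^sup>+x. (\<Sum>k. c k * indicator (AA k :: 'a set) x) \<partial>lebesgue)"
    by simp
  also have "\<dots> = (\<Sum>k. \<integral>\<^sup>+x. c k * indicator (AA k :: 'a set) x \<partial>lebesgue)"
    by (rule nn_integral_suminf) measurable
  also have "\<dots> = (\<Sum>k. c k * ennreal (mm k))"
    by (simp add: nn_integral_cmult_indicator emeasure_AA)
  finally show ?thesis .
qed

lemma nn_int_AA_ge:
  fixes f :: "'a::euclidean_space \<Rightarrow> ennreal"
  assumes "\<And>k x. x \<in> AA k \<Longrightarrow> c k \<le> f x"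
  shows "(\<Sum>k. c k * ennreal (mm k)) \<le> (\<integral>\<^sup>+x. f x \<partial>lebesgue)"
proof -
  have "(\<Sum>k. c k * ennreal (mm k)) = (\<integral>\<^sup>+x. (\<Sum>k. c k * indicator (AA k :: 'a set) x) \<partial>lebesgue)"
    by (rule nn_int_AA[symmetric]) (auto simp: sum_AA_in sum_AA_out)
  also have "\<dots> \<le> (\<integral>\<^sup>+x. f x \<partial>lebesgue)"
    by (intro nn_integral_mono) (metis assms sum_AA_in sum_AA_out zero_le)
  finally show ?thesis .
qed

lemma mm_nonneg: "0 \<le> mm k"
proof -
  have "exp (- real (Suc k)) \<le> exp (- real k)" by (subst exp_le_cancel_iff) simp
  then show ?thesis unfolding mm_def by linarith
qed

lemma mm_le: "mm k \<le> exp (- real k)"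
  unfolding mm_def by simp

lemma sqrt_le_exp: "sqrt (real k) \<le> exp (real k / 2)"
proof -
  have "real k \<le> exp (real k)" using exp_ge_add_one_self[of "real k"] by linarith
  also have "exp (real k) = (exp (real k / 2))\<^sup>2"
    by (simp add: power2_eq_square exp_add[symmetric])
  finally show ?thesis using real_sqrt_le_mono by fastforce
qed

lemma summable_geom_exp: "c < 0 \<Longrightarrow> summable (\<lambda>k::nat. exp (c * real k))"
proof -
  assume "c < 0"
  then have "norm (exp c) < 1" by simp
  then have "summable (\<lambda>k::nat. exp c ^ k)" by (rule summable_geometric)
  then show ?thesis by (simp add: exp_of_nat_mult[symmetric] mult.commute)
qed

lemma u0_L1: "(\<integral>\<^sup>+x. ennreal (norm (u0 x)) \<partial>lebesgue) < \<infinity>"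
proof -
  have "(\<integral>\<^sup>+x. ennreal (norm (u0 x)) \<partial>lebesgue) = (\<Sum>k. ennreal (sqrt (real k)) * ennreal (mm k))"
    by (rule nn_int_AA) (auto simp: u0_in u0_out)
  also have "\<dots> = (\<Sum>k. ennreal (sqrt (real k) * mm k))"
    by (simp add: ennreal_mult mm_nonneg)
  also have "\<dots> < \<infinity>"
  proof -
    have "summable (\<lambda>k. sqrt (real k) * mm k)"
    proof (rule summable_comparison_test'[OF summable_geom_exp[of "-1/2"]])
      fix k :: nat
      have "sqrt (real k) * mm k \<le> exp (real k / 2) * exp (- real k)"
        by (intro mult_mono sqrt_le_exp mm_le) (auto simp: mm_nonneg)
      also have "\<dots> = exp (-1/2 * real k)" by (simp add: exp_add[symmetric])
      finally show "norm (sqrt (real k) * mm k) \<le> exp (-1/2 * real k)"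
        using mm_nonneg by simp
    qed simp
    moreover have "\<And>k. 0 \<le> sqrt (real k) * mm k" using mm_nonneg by simp
    ultimately have "(\<Sum>k. ennreal (sqrt (real k) * mm k)) \<noteq> top"
      by (rule ennreal_suminf_neq_top)
    then show ?thesis by (simp add: less_top)
  qed
  finally show ?thesis .
qed

lemma u0_integrable: "integrable lebesgue u0"
  using u0_L1 by (simp add: integrable_iff_bounded)

lemma u0_modular: "orlicz_exp2_modular (\<lambda>x. complex_of_real (u0 x)) 2 < \<infinity>"
proof -
  have "orlicz_exp2_modular (\<lambda>x. complex_of_real (u0 x)) 2 =
     (\<Sum>k. ennreal (exp (real k / 4) - 1) * ennreal (mm k))"
    unfolding orlicz_exp2_modular_def
    by (rule nn_int_AA) (auto simp: u0_in u0_out)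
  also have "\<dots> = (\<Sum>k. ennreal ((exp (real k / 4) - 1) * mm k))"
    by (simp add: ennreal_mult mm_nonneg)
  also have "\<dots> < \<infinity>"
  proof -
    have "summable (\<lambda>k. (exp (real k / 4) - 1) * mm k)"
    proof (rule summable_comparison_test'[OF summable_geom_exp[of "-3/4"]])
      fix k :: nat
      have "(exp (real k / 4) - 1) * mm k \<le> exp (real k / 4) * exp (- real k)"
        by (intro mult_mono mm_le) (auto simp: mm_nonneg)
      also have "\<dots> = exp (-3/4 * real k)" by (simp add: exp_add[symmetric])
      finally show "norm ((exp (real k / 4) - 1) * mm k) \<le> exp (-3/4 * real k)"
        using mm_nonneg by simp
    qed simp
    moreover have "\<And>k. 0 \<le> (exp (real k / 4) - 1) * mm k" using mm_nonneg by simp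
    ultimately have "(\<Sum>k. ennreal ((exp (real k / 4) - 1) * mm k)) \<noteq> top"
      by (rule ennreal_suminf_neq_top)
    then show ?thesis by (simp add: less_top)
  qed
  finally show ?thesis .
qed

lemma u0_expL2: "(\<lambda>x. complex_of_real (u0 x)) \<in> expL2"
  unfolding expL2_def L1_loc_def
proof (intro CollectI conjI allI impI)
  show "(\<lambda>x. complex_of_real (u0 x)) \<in> borel_measurable lebesgue" by measurable
  fix K :: "'a set" assume "compact K"
  then have K: "K \<in> sets lebesgue" using lmeasurable_compact fmeasurable_def by blast
  show "set_integrable lebesgue K (\<lambda>x. complex_of_real (u0 x))"
    unfolding set_integrable_def
    by (intro integrable_mult_indicator K integrable_of_real u0_integrable)
next
  show "\<exists>\<alpha>>0. orlicz_exp2_modular (\<lambda>x. complex_of_real (u0 x)) \<alpha> < \<infinity>"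
    using u0_modular by (intro exI[of _ 2]) auto
qed

definition Mk :: "'a::euclidean_space itself \<Rightarrow> real \<Rightarrow> real" where
  "Mk T t = (2 * pi) powr (- real DIM('a)) * (LINT xi|(lebesgue::'a measure). exp (- t * norm xi ^ 4))"

lemma Mk_nonneg: "0 \<le> Mk TYPE('a::euclidean_space) t"
  unfolding Mk_def by (intro mult_nonneg_nonneg Bochner_Integration.integral_nonneg) auto

lemma kernel_bound: "cmod (biharm_kernel t (z::'a::euclidean_space)) \<le> Mk TYPE('a) t"
proof -
  let ?f = "\<lambda>xi::'a. complex_of_real (exp (- t * norm xi ^ 4)) * exp (\<i> * complex_of_real (z \<bullet> xi))"
  have n: "norm (?f xi) = exp (- t * norm xi ^ 4)" for xi
    by (simp add: norm_mult)
  have "cmod (LINT xi|lebesgue. ?f xi) \<le> (LINT xi|lebesgue. norm (?f xi))"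
    by (rule integral_norm_bound)
  also have "\<dots> = (LINT xi|(lebesgue::'a measure). exp (- t * norm xi ^ 4))"
    by (simp only: n)
  finally have *: "cmod (LINT xi|lebesgue. ?f xi) \<le> (LINT xi|(lebesgue::'a measure). exp (- t * norm xi ^ 4))" .
  have a: "cmod (complex_of_real ((2 * pi) powr (- real DIM('a)))) = (2 * pi) powr (- real DIM('a))"
    by simp
  show ?thesis
    unfolding biharm_kernel_def Mk_def norm_mult a
    by (rule mult_left_mono[OF *]) simp
qed

lemma semigroup_bound:
  "cmod (biharm_semigroup t (\<lambda>y. complex_of_real (u0 y)) (x::'a::euclidean_space))
     \<le> Mk TYPE('a) t * (LINT y|lebesgue. norm (u0 (y::'a)))"
proof -
  let ?f = "\<lambda>y. biharm_kernel t (x - y) * complex_of_real (u0 y)"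
  have "cmod (LINT y|lebesgue. ?f y) \<le> (LINT y|lebesgue. norm (?f y))"
    by (rule integral_norm_bound)
  also have "\<dots> \<le> (LINT y|lebesgue. Mk TYPE('a) t * norm (u0 (y::'a)))"
  proof (cases "integrable lebesgue (\<lambda>y. norm (?f y))")
    case True
    have i2: "integrable lebesgue (\<lambda>y::'a. Mk TYPE('a) t * norm (u0 y))"
      using u0_integrable by auto
    have le: "norm (?f y) \<le> Mk TYPE('a) t * norm (u0 y)" for y :: 'a
      unfolding norm_mult norm_of_real using kernel_bound[of t "x - y"]
      by (simp add: mult_right_mono)
    show ?thesis using integral_mono[OF True i2 le] .
  next
    case False
    have h: "0 \<le> (LINT y|lebesgue. Mk TYPE('a) t * norm (u0 (y::'a)))"
      by (rule Bochner_Integration.integral_nonneg) (simp add: Mk_nonneg)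
    show ?thesis unfolding not_integrable_integral_eq[OF False] by (rule h)
  qed
  also have "\<dots> = Mk TYPE('a) t * (LINT y|lebesgue. norm (u0 (y::'a)))" by simp
  finally show ?thesis unfolding biharm_semigroup_def .
qed

lemma term_ge_1:
  assumes "1 \<le> k"
  shows "1 \<le> (exp (4 * real k) - 1) * mm k"
proof -
  have k: "1 \<le> real k" using assms by simp
  have e1: "exp (-1::real) \<le> 1/2"
  proof -
    have "2 \<le> exp (1::real)" using exp_ge_add_one_self[of 1] by simp
    then show ?thesis by (simp add: exp_minus field_simps)
  qed
  have mm_eq: "mm k = exp (- real k) * (1 - exp (-1))"
    unfolding mm_def by (simp add: algebra_simps exp_add[symmetric])
  have "exp (- real k) * (1 - exp (-1)) \<ge> exp (- real k) / 2"
    using e1 by (simp add: field_simps)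
  have e4: "exp (4 * real k) \<ge> 2"
    using exp_ge_add_one_self[of "4 * real k"] k by linarith
  have "(exp (4 * real k) - 1) * mm k \<ge> (exp (4 * real k) / 2) * (exp (- real k) / 2)"
    unfolding mm_eq using e4 e1
    by (intro mult_mono) (auto simp: field_simps)
  also have "(exp (4 * real k) / 2) * (exp (- real k) / 2) = exp (3 * real k) / 4"
    by (simp add: exp_add[symmetric])
  finally have *: "exp (3 * real k) / 4 \<le> (exp (4 * real k) - 1) * mm k" .
  have "4 \<le> exp (3 * real k)"
    using exp_ge_add_one_self[of "3 * real k"] k by linarith
  with * show ?thesis by simp
qed

lemma ennreal_sum_infinite:
  fixes a :: "nat \<Rightarrow> real"
  assumes "\<And>k. K \<le> k \<Longrightarrow> 1 \<le> a k"
  shows "(\<Sum>k. ennreal (a k)) = \<infinity>"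
proof (rule ccontr)
  assume "(\<Sum>k. ennreal (a k)) \<noteq> \<infinity>"
  then have "(\<Sum>k. ennreal (a k)) < top" by (simp add: less_top)
  then obtain n where n: "(\<Sum>k. ennreal (a k)) < of_nat n"
    using ennreal_Ex_less_of_nat by blast
  have "of_nat n = (\<Sum>k\<in>{K..<K+n}. (1::ennreal))" by simp
  also have "\<dots> \<le> (\<Sum>k\<in>{K..<K+n}. ennreal (a k))"
    by (intro sum_mono) (use assms in \<open>auto simp: ennreal_leI[of 1, simplified]\<close>)
  also have "\<dots> \<le> (\<Sum>k. ennreal (a k))"
    by (intro sum_le_suminf) auto
  finally show False using n by simp
qed

lemma big_modular:
  fixes g :: "'a::euclidean_space \<Rightarrow> complex"
  assumes gB: "\<And>x. cmod (g x) \<le> B" and a0: "0 < \<alpha>" and a1: "\<alpha> \<le> 1/4"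
  shows "orlicz_exp2_modular (\<lambda>x. g x - complex_of_real (u0 x)) \<alpha> = \<infinity>"
proof -
  have B0: "0 \<le> B" using gB[of 0] norm_ge_zero order_trans by blast
  define K where "K = nat \<lceil>4 * B\<^sup>2\<rceil> + 1"
  define c where "c k = ennreal (if K \<le> k then (exp (4 * real k) - 1) else 0)" for k
  have pt: "c k \<le> ennreal (exp ((cmod (g x - complex_of_real (u0 x)))\<^sup>2 / \<alpha>\<^sup>2) - 1)"
    if x: "x \<in> AA k" for k x
  proof (cases "K \<le> k")
    case False then show ?thesis by (simp add: c_def)
  next
    case True
    have "4 * B\<^sup>2 \<le> real k" using True unfolding K_def by linarith
    then have "sqrt (4 * B\<^sup>2) \<le> sqrt (real k)" by (rule real_sqrt_le_mono)
    then have sk: "2 * B \<le> sqrt (real k)" using B0 by (simp add: real_sqrt_mult)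
    have "u0 x - cmod (g x) \<le> cmod (g x - complex_of_real (u0 x))"
      using norm_triangle_ineq2[of "complex_of_real (u0 x)" "g x"] u0_nonneg[of x]
      by (simp add: norm_minus_commute)
    then have d: "sqrt (real k) / 2 \<le> cmod (g x - complex_of_real (u0 x))"
      using u0_in[OF x] gB[of x] sk by simp
    have "real k / 4 = (sqrt (real k) / 2)\<^sup>2" by (simp add: power_divide)
    also have "\<dots> \<le> (cmod (g x - complex_of_real (u0 x)))\<^sup>2"
      using d by (intro power_mono) auto
    finally have q: "real k / 4 \<le> (cmod (g x - complex_of_real (u0 x)))\<^sup>2" .
    have a2: "\<alpha>\<^sup>2 \<le> 1/16" using a0 a1 power_mono[of \<alpha> "1/4" 2] by (simp add: power_divide)
    have "4 * real k = (real k / 4) / (1/16)" by simp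
    also have "\<dots> \<le> (real k / 4) / \<alpha>\<^sup>2"
      using a0 a2 by (intro divide_left_mono) auto
    also have "\<dots> \<le> (cmod (g x - complex_of_real (u0 x)))\<^sup>2 / \<alpha>\<^sup>2"
      using q a0 by (intro divide_right_mono) auto
    finally have "exp (4 * real k) \<le> exp ((cmod (g x - complex_of_real (u0 x)))\<^sup>2 / \<alpha>\<^sup>2)"
      by simp
    then show ?thesis unfolding c_def using True by (intro ennreal_leI) simp
  qed
  have "(\<Sum>k. c k * ennreal (mm k)) \<le> orlicz_exp2_modular (\<lambda>x. g x - complex_of_real (u0 x)) \<alpha>"
    unfolding orlicz_exp2_modular_def by (rule nn_int_AA_ge) (rule pt)
  moreover have "(\<Sum>k. c k * ennreal (mm k)) = \<infinity>"
  proof -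
    have "(\<Sum>k. c k * ennreal (mm k)) = (\<Sum>k. ennreal ((if K \<le> k then (exp (4 * real k) - 1) else 0) * mm k))"
      unfolding c_def by (subst ennreal_mult) (auto simp: mm_nonneg)
    also have "\<dots> = \<infinity>"
      by (rule ennreal_sum_infinite[of K]) (use term_ge_1 K_def in auto)
    finally show ?thesis .
  qed
  ultimately show ?thesis by (simp add: top_unique)
qed

theorem proposition3p8:
  "\<exists>(u0 :: 'a::euclidean_space \<Rightarrow> real) (C::real).
      (\<lambda>x. complex_of_real (u0 x)) \<in> expL2 \<and> C > 0 \<and>
      (\<forall>t>0. expL2_norm (\<lambda>x. biharm_semigroup t (\<lambda>y. complex_of_real (u0 y)) x
                               - complex_of_real (u0 x)) \<ge> ennreal C)"
proof (intro exI[of _ u0] exI[of _ "1/4"] conjI allI impI)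
  show "(\<lambda>x. complex_of_real (u0 x)) \<in> (expL2 :: ('a \<Rightarrow> complex) set)" by (rule u0_expL2)
  show "(0::real) < 1/4" by simp
  fix t :: real assume "0 < t"
  let ?g = "\<lambda>x::'a. biharm_semigroup t (\<lambda>y. complex_of_real (u0 y)) x"
  have gB: "cmod (?g x) \<le> Mk TYPE('a) t * (LINT y|lebesgue. norm (u0 (y::'a)))" for x
    by (rule semigroup_bound)
  show "ennreal (1/4) \<le> expL2_norm (\<lambda>x. ?g x - complex_of_real (u0 x))"
    unfolding expL2_norm_def
  proof (rule Inf_greatest)
    fix z assume "z \<in> ennreal ` {\<alpha>. 0 < \<alpha> \<and> orlicz_exp2_modular (\<lambda>x. ?g x - complex_of_real (u0 x)) \<alpha> \<le> 1}"
    then obtain \<alpha> where z: "z = ennreal \<alpha>" and a0: "0 < \<alpha>"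
      and m: "orlicz_exp2_modular (\<lambda>x. ?g x - complex_of_real (u0 x)) \<alpha> \<le> 1" by auto
    have "1/4 \<le> \<alpha>"
    proof (rule ccontr)
      assume "\<not> 1/4 \<le> \<alpha>"
      then have "orlicz_exp2_modular (\<lambda>x. ?g x - complex_of_real (u0 x)) \<alpha> = \<infinity>"
        using big_modular[OF gB a0] by simp
      with m show False by (simp add: top_unique)
    qed
    then show "ennreal (1/4) \<le> z" unfolding z by (rule ennreal_leI)
  qed
qed
end
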